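(* For $n\ge1$ and $0\le k<n$, $$|\mathbf{I}_{n,k}(210)|=|\mathbf{I}_{n-1}(210)|-\sum_{l=k+1}^{n-4}\sum_{j=l+1}^{n-3}\sum_{i\le j}|\mathbf{I}_{n-3,i}(210)|.$$ Equivalently, $|\mathbf{I}_{n,k}(210)|=|\mathbf{I}_{n-1}(210)|$ if $1\le n\le4$ or $k>n-5\ge0$, and for $0\le k\le n-5$, $$|\mathbf{I}_{n,k}(210)|=|\mathbf{I}_{n-1}(210)|-\frac12\Big[(n-k-4)(n-k-3)\sum_{i=0}^{k+2}|\mathbf{I}_{n-3,i}(210)|+\sum_{i=k+3}^{n-4}(n-i-2)(n+i-2k-5)|\mathbf{I}_{n-3,i}(210)|\Big].$$
   Context: An inversion sequence of length $n$ is an integer sequence $e=e_1\dots e_n$ with $0\le e_i<i$ for all $i$; $\mathbf{I}_n$ denotes the set of these. $\mathbf{I}_n(210)$ is the set of $e\in\mathbf{I}_n$ with no $i$ such that $e_i>e_{i+1}>e_{i+2}$ (avoiding the consecutive pattern $210$). $\mathbf{I}_{n,k}(210)=\{e\in\mathbf{I}_n(210):e_n=k\}$, empty for $k\ge n$. Conventions: $|\mathbf{I}_0(210)|=1$; empty sums are $0$. *)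

theory Defs
  imports Complex_Main
begin

text \<open>Inversion sequences e_1 ... e_n are represented as lists of length n,
  with 0-based indexing: the i-th entry (1-based) is e ! (i - 1), so the
  condition 0 \<le> e_i < i becomes e ! i < i + 1 for i < n.\<close>

definition inv_seqs :: "nat \<Rightarrow> nat list set" where
  "inv_seqs n = {e. length e = n \<and> (\<forall>i<n. e ! i < Suc i)}"

definition avoids_210 :: "nat list \<Rightarrow> bool" where
  "avoids_210 e \<longleftrightarrow> \<not> (\<exists>i. i + 2 < length e \<and> e ! i > e ! (i + 1) \<and> e ! (i + 1) > e ! (i + 2))"

definition I210 :: "nat \<Rightarrow> nat list set" where
  "I210 n = {e \<in> inv_seqs n. avoids_210 e}"

definition I210k :: "nat \<Rightarrow> nat \<Rightarrow> nat list set" where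
  "I210k n k = {e \<in> I210 n. 0 < n \<and> e ! (n - 1) = k}"

end

theory Submission
  imports Defs
begin


lemma finite_I210: "finite (I210 m)"
proof (rule finite_subset)
  show "I210 m \<subseteq> {xs. set xs \<subseteq> {..<m} \<and> length xs = m}"
    by (auto simp: I210_def inv_seqs_def in_set_conv_nth) (metis less_trans_Suc le_less_trans less_Suc_eq_le not_less_eq_eq)
  show "finite {xs. set xs \<subseteq> {..<m} \<and> length xs = m}"
    by (rule finite_lists_length_eq) simp
qed

lemma snoc_I210:
  assumes len: "length e = m"
  shows "(e @ [x] \<in> I210 (Suc m)) \<longleftrightarrow>
     (e \<in> I210 m \<and> x \<le> m \<and> \<not> (2 \<le> m \<and> e!(m-2) > e!(m-1) \<and> e!(m-1) > x))"
proof -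
  have inv: "(e @ [x] \<in> inv_seqs (Suc m)) \<longleftrightarrow> (e \<in> inv_seqs m \<and> x \<le> m)"
  proof
    assume h: "e @ [x] \<in> inv_seqs (Suc m)"
    have "\<forall>i<m. e!i < Suc i"
    proof (intro allI impI)
      fix i assume "i < m"
      with h len show "e!i < Suc i" unfolding inv_seqs_def
        by (metis (no_types, lifting) less_SucI mem_Collect_eq nth_append_left)
    qed
    moreover have "x \<le> m" using h len unfolding inv_seqs_def
      by (metis (no_types, lifting) lessI less_Suc_eq_le mem_Collect_eq nth_append_length)
    ultimately show "e \<in> inv_seqs m \<and> x \<le> m" using len by (simp add: inv_seqs_def)
  next
    assume h: "e \<in> inv_seqs m \<and> x \<le> m"
    show "e @ [x] \<in> inv_seqs (Suc m)" unfolding inv_seqs_def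
    proof (intro CollectI conjI allI impI)
      show "length (e @ [x]) = Suc m" using len by simp
      fix i assume "i < Suc m"
      then show "(e @ [x]) ! i < Suc i" using h len
        by (cases "i < m") (auto simp: inv_seqs_def nth_append)
    qed
  qed
  have av: "avoids_210 (e @ [x]) \<longleftrightarrow>
     (avoids_210 e \<and> \<not> (2 \<le> m \<and> e!(m-2) > e!(m-1) \<and> e!(m-1) > x))"
  proof
    assume h: "avoids_210 (e @ [x])"
    have "avoids_210 e"
      unfolding avoids_210_def
    proof
      assume "\<exists>i. i + 2 < length e \<and> e ! i > e ! (i + 1) \<and> e ! (i + 1) > e ! (i + 2)"
      then obtain i where "i + 2 < length e" "e ! i > e ! (i + 1)" "e ! (i + 1) > e ! (i + 2)" by blast
      moreover have "(e@[x])!i = e!i" "(e@[x])!(i+1) = e!(i+1)" "(e@[x])!(i+2) = e!(i+2)"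
        using \<open>i + 2 < length e\<close> by (auto simp: nth_append)
      moreover have "i + 2 < length (e@[x])" using \<open>i + 2 < length e\<close> by simp
      ultimately show False using h unfolding avoids_210_def by metis
    qed
    moreover have "\<not> (2 \<le> m \<and> e!(m-2) > e!(m-1) \<and> e!(m-1) > x)"
    proof
      assume c: "2 \<le> m \<and> e!(m-2) > e!(m-1) \<and> e!(m-1) > x"
      have m2': "2 \<le> m" using c by simp
      then have "(m-2) + 2 < length (e@[x])" using len by simp
      moreover have "(e@[x])!(m-2) = e!(m-2)" "(e@[x])!(m-2+1) = e!(m-1)" "(e@[x])!(m-2+2) = x"
      proof -
        have m2: "2 \<le> m" using c by simp
        then have "m - 2 < m" "m-2+1 < m" "m - 2 + 1 = m - 1" "m - 2 + 2 = m" by auto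
        then show "(e@[x])!(m-2) = e!(m-2)" "(e@[x])!(m-2+1) = e!(m-1)" "(e@[x])!(m-2+2) = x"
          using len by (auto simp: nth_append simp del: One_nat_def)
      qed
      ultimately show False using h c unfolding avoids_210_def by metis
    qed
    ultimately show "avoids_210 e \<and> \<not> (2 \<le> m \<and> e!(m-2) > e!(m-1) \<and> e!(m-1) > x)" ..
  next
    assume h: "avoids_210 e \<and> \<not> (2 \<le> m \<and> e!(m-2) > e!(m-1) \<and> e!(m-1) > x)"
    show "avoids_210 (e @ [x])" unfolding avoids_210_def
    proof
      assume "\<exists>i. i + 2 < length (e@[x]) \<and> (e@[x]) ! i > (e@[x]) ! (i + 1) \<and> (e@[x]) ! (i + 1) > (e@[x]) ! (i + 2)"
      then obtain i where i: "i + 2 < length (e@[x])" "(e@[x]) ! i > (e@[x]) ! (i + 1)" "(e@[x]) ! (i + 1) > (e@[x]) ! (i + 2)" by blast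
      show False
      proof (cases "i + 2 < m")
        case True
        then have "e ! i > e ! (i + 1)" "e ! (i + 1) > e ! (i + 2)" using i len by (auto simp: nth_append)
        then show False using h True len unfolding avoids_210_def by blast
      next
        case False
        then have im: "i = m - 2" "2 \<le> m" using i len by auto
        then have "i < m" "i + 1 < m" "i + 1 = m - 1" "i + 2 = m" by auto
        then have "(e@[x])!i = e!(m-2)" "(e@[x])!(i+1) = e!(m-1)" "(e@[x])!(i+2) = x"
          using len im by (auto simp: nth_append simp del: One_nat_def)
        then show False using h i im by auto
      qed
    qed
  qed
  show ?thesis using inv av len by (auto simp: I210_def)
qed



lemma I210_len: "e \<in> I210 m \<Longrightarrow> length e = m"
  by (simp add: I210_def inv_seqs_def)

lemma I210_last_split:
  assumes "e \<in> I210 (Suc m)"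
  obtains f x where "e = f @ [x]" "length f = m"
proof -
  have "length e = Suc m" using assms by (rule I210_len)
  then obtain f x where "e = f @ [x]" by (cases e rule: rev_cases) auto
  with \<open>length e = Suc m\<close> show ?thesis using that by simp
qed

lemma Ik_eq:
  assumes "k \<le> m"
  shows "I210k (Suc m) k = (\<lambda>e. e @ [k]) ` {e \<in> I210 m. \<not> (2 \<le> m \<and> e!(m-2) > e!(m-1) \<and> e!(m-1) > k)}"
proof
  show "I210k (Suc m) k \<subseteq> (\<lambda>e. e @ [k]) ` {e \<in> I210 m. \<not> (2 \<le> m \<and> e!(m-2) > e!(m-1) \<and> e!(m-1) > k)}"
  proof
    fix e assume e: "e \<in> I210k (Suc m) k"
    then have e1: "e \<in> I210 (Suc m)" "e ! m = k" by (auto simp: I210k_def)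
    obtain f x where fx: "e = f @ [x]" "length f = m" using e1(1) by (rule I210_last_split)
    have "x = k" using e1(2) fx by (metis nth_append_length)
    then show "e \<in> (\<lambda>e. e @ [k]) ` {e \<in> I210 m. \<not> (2 \<le> m \<and> e!(m-2) > e!(m-1) \<and> e!(m-1) > k)}"
      using e1 fx snoc_I210[OF fx(2), of x] by auto
  qed
next
  show "(\<lambda>e. e @ [k]) ` {e \<in> I210 m. \<not> (2 \<le> m \<and> e!(m-2) > e!(m-1) \<and> e!(m-1) > k)} \<subseteq> I210k (Suc m) k"
  proof
    fix e assume "e \<in> (\<lambda>e. e @ [k]) ` {e \<in> I210 m. \<not> (2 \<le> m \<and> e!(m-2) > e!(m-1) \<and> e!(m-1) > k)}"
    then obtain f where f: "e = f @ [k]" "f \<in> I210 m" "\<not> (2 \<le> m \<and> f!(m-2) > f!(m-1) \<and> f!(m-1) > k)" by blast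
    have lf: "length f = m" using f(2) by (rule I210_len)
    have "e \<in> I210 (Suc m)" using f assms snoc_I210[OF lf, of k] by simp
    then show "e \<in> I210k (Suc m) k" using f lf by (simp add: I210k_def nth_append)
  qed
qed

lemma card_Ik:
  assumes "k \<le> m"
  shows "card (I210k (Suc m) k) + card {e \<in> I210 m. 2 \<le> m \<and> e!(m-2) > e!(m-1) \<and> e!(m-1) > k} = card (I210 m)"
proof -
  let ?G = "{e \<in> I210 m. \<not> (2 \<le> m \<and> e!(m-2) > e!(m-1) \<and> e!(m-1) > k)}"
  let ?B = "{e \<in> I210 m. 2 \<le> m \<and> e!(m-2) > e!(m-1) \<and> e!(m-1) > k}"
  have "card (I210k (Suc m) k) = card ?G"
    unfolding Ik_eq[OF assms] by (rule card_image) (simp add: inj_on_def)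
  moreover have "card ?G + card ?B = card (?G \<union> ?B)"
    by (rule card_Un_disjoint[symmetric]) (auto intro: finite_subset[OF _ finite_I210])
  moreover have "?G \<union> ?B = I210 m" by blast
  ultimately show ?thesis by simp
qed



lemma bad_eq:
  "{e \<in> I210 m. 2 \<le> m \<and> e!(m-2) > e!(m-1) \<and> e!(m-1) > k} =
   (\<lambda>(l,j,f). f @ [j,l]) ` (SIGMA l:{k+1..m-3}. SIGMA j:{l+1..m-2}. {f \<in> I210 (m-2). f!(m-3) \<le> j})"
  (is "?B = ?h ` ?S")
proof
  show "?B \<subseteq> ?h ` ?S"
  proof
    fix e assume e: "e \<in> ?B"
    from e have m2: "2 \<le> m" by simp
    obtain p where p: "m = Suc (Suc p)"
      by (rule that[of "m - 2"]) (use m2 in auto)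
    have eI: "e \<in> I210 (Suc (Suc p))" using e p by simp
    obtain g l where gl: "e = g @ [l]" "length g = Suc p" using eI by (rule I210_last_split)
    have s1: "g \<in> I210 (Suc p)" "l \<le> Suc p" "\<not> (2 \<le> Suc p \<and> g!(Suc p-2) > g!(Suc p-1) \<and> g!(Suc p-1) > l)"
      using snoc_I210[OF gl(2), of l] eI gl by auto
    obtain f j where fj: "g = f @ [j]" "length f = p" using s1(1) by (rule I210_last_split)
    have s2: "f \<in> I210 p" "j \<le> p"
      using snoc_I210[OF fj(2), of j] s1 fj by auto
    have ej: "e!(m-2) = j" "e!(m-1) = l" using gl fj p by (auto simp: nth_append)
    have jl: "j > l" "l > k" using e ej by auto
    then have p2: "2 \<le> p" using s2 by linarith
    have gp: "g!(Suc p - 2) = f!(p-1)" "g!(Suc p - 1) = j" using fj p2 by (auto simp: nth_append)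
    have fle: "f!(p-1) \<le> j" using s1(3) gp jl p2 by auto
    have "(l, j, f) \<in> ?S" using p s2 fle jl p2 by auto
    moreover have "e = ?h (l, j, f)" using gl fj by simp
    ultimately show "e \<in> ?h ` ?S" by blast
  qed
next
  show "?h ` ?S \<subseteq> ?B"
  proof
    fix e assume "e \<in> ?h ` ?S"
    then obtain l j f where e: "e = f @ [j,l]" and l: "l \<in> {k+1..m-3}" and j: "j \<in> {l+1..m-2}"
      and f: "f \<in> I210 (m-2)" "f!(m-3) \<le> j" by auto
    from l have m4: "4 \<le> m" by auto
    obtain p where p: "m = Suc (Suc p)" "1 \<le> p"
      by (rule that[of "m - 2"]) (use m4 in auto)
    have lf: "length f = p" using f p I210_len by auto
    have s1: "f @ [j] \<in> I210 (Suc p)"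
      using snoc_I210[OF lf, of j] f j p by auto
    have lfj: "length (f@[j]) = Suc p" using lf by simp
    have gp: "(f@[j])!(Suc p - 2) = f!(p-1)" "(f@[j])!(Suc p - 1) = j" using lf p by (auto simp: nth_append)
    have "(f@[j]) @ [l] \<in> I210 (Suc (Suc p))"
      using snoc_I210[OF lfj, of l] s1 gp f p j l by auto
    moreover have "e!(m-2) = j" "e!(m-1) = l" using e lf p by (auto simp: nth_append)
    ultimately show "e \<in> ?B" using e p j l by auto
  qed
qed

lemma bad_inj:
  "inj_on (\<lambda>(l,j,f). f @ [j,l]) (SIGMA l:{k+1..m-3}. SIGMA j:{l+1..m-2}. {f \<in> I210 (m-2). f!(m-3) \<le> j})"
  by (auto simp: inj_on_def dest!: I210_len)

lemma card_bad:
  "card {e \<in> I210 m. 2 \<le> m \<and> e!(m-2) > e!(m-1) \<and> e!(m-1) > k} =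
   (\<Sum>l\<in>{k+1..m-3}. \<Sum>j\<in>{l+1..m-2}. card {f \<in> I210 (m-2). f!(m-3) \<le> j})"
  unfolding bad_eq
  by (subst card_image[OF bad_inj]) (simp add: finite_I210)

lemma card_C:
  assumes "1 \<le> p"
  shows "card {f \<in> I210 p. f!(p-1) \<le> j} = (\<Sum>i\<in>{0..j}. card (I210k p i))"
proof -
  have "{f \<in> I210 p. f!(p-1) \<le> j} = (\<Union>i\<in>{0..j}. I210k p i)"
    using assms by (auto simp: I210k_def)
  moreover have "card (\<Union>i\<in>{0..j}. I210k p i) = (\<Sum>i\<in>{0..j}. card (I210k p i))"
    by (rule card_UN_disjoint) (auto simp: I210k_def intro: finite_subset[OF _ finite_I210])
  ultimately show ?thesis by simp
qed

lemma nat_main: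
  assumes "1 \<le> n" "k < n"
  shows "card (I210k n k) + (\<Sum>l\<in>{k+1..n-4}. \<Sum>j\<in>{l+1..n-3}. \<Sum>i\<in>{0..j}. card (I210k (n-3) i))
         = card (I210 (n-1))"
proof -
  obtain m where m: "n = Suc m" using assms by (cases n) auto
  have A: "card (I210k n k) + card {e \<in> I210 m. 2 \<le> m \<and> e!(m-2) > e!(m-1) \<and> e!(m-1) > k} = card (I210 m)"
    using card_Ik[of k m] assms m by simp
  have e3: "Suc m - 3 = m - 2" and e4: "Suc m - 4 = m - 3" by auto
  have B: "card {e \<in> I210 m. 2 \<le> m \<and> e!(m-2) > e!(m-1) \<and> e!(m-1) > k} =
     (\<Sum>l\<in>{k+1..n-4}. \<Sum>j\<in>{l+1..n-3}. \<Sum>i\<in>{0..j}. card (I210k (n-3) i))"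
    unfolding card_bad m
    unfolding e3 e4
  proof (intro sum.cong refl)
    fix l j assume "l \<in> {k+1..m-3}" "j \<in> {l+1..m-2}"
    then have "1 \<le> m - 2" by auto
    moreover have "m - 2 - 1 = m - 3" by simp
    ultimately show "card {f \<in> I210 (m - 2). f ! (m - 3) \<le> j} = (\<Sum>i\<in>{0..j}. card (I210k (m - 2) i))"
      using card_C[of "m-2" j] by simp
  qed
  show ?thesis using A B m by simp
qed



lemma ident:
  fixes a :: "nat \<Rightarrow> real"
  shows "2 * (\<Sum>l\<in>{Suc k..Suc k + d}. \<Sum>j\<in>{Suc l..Suc (Suc k) + d}. \<Sum>i\<in>{0..j}. a i)
       = real (d+1) * real (d+2) * (\<Sum>i\<in>{0..k+2}. a i)
         + (\<Sum>i\<in>{k+3..k+2+d}. (real k + 3 + real d - real i) * (real d + real i - real k) * a i)"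
proof (induction d)
  case 0
  then show ?case by (simp add: numeral_2_eq_2)
next
  case (Suc d)
  define P where "P j = (\<Sum>i\<in>{0..j}. a i)" for j
  define A where "A = (\<Sum>i\<in>{0..k+2}. a i)"
  let ?N = "Suc (Suc (Suc k)) + d"
  have inner: "(\<Sum>j\<in>{Suc l..Suc ?N - 1}. P j) = (\<Sum>j\<in>{Suc l..Suc (Suc k) + d}. P j) + P ?N"
    if "l \<le> Suc k + Suc d" for l
    using that by (simp add: sum.cl_ivl_Suc)
  have L: "(\<Sum>l\<in>{Suc k..Suc k + Suc d}. \<Sum>j\<in>{Suc l..Suc (Suc k) + Suc d}. P j)
        = (\<Sum>l\<in>{Suc k..Suc k + d}. \<Sum>j\<in>{Suc l..Suc (Suc k) + d}. P j) + real (d+2) * P ?N"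
  proof -
    have "(\<Sum>l\<in>{Suc k..Suc k + Suc d}. \<Sum>j\<in>{Suc l..Suc (Suc k) + Suc d}. P j)
        = (\<Sum>l\<in>{Suc k..Suc k + Suc d}. (\<Sum>j\<in>{Suc l..Suc (Suc k) + d}. P j) + P ?N)"
      by (rule sum.cong) (auto simp: sum.cl_ivl_Suc)
    also have "\<dots> = (\<Sum>l\<in>{Suc k..Suc k + Suc d}. \<Sum>j\<in>{Suc l..Suc (Suc k) + d}. P j) + real (d+2) * P ?N"
      by (simp add: sum.distrib)
    also have "(\<Sum>l\<in>{Suc k..Suc k + Suc d}. \<Sum>j\<in>{Suc l..Suc (Suc k) + d}. P j)
        = (\<Sum>l\<in>{Suc k..Suc k + d}. \<Sum>j\<in>{Suc l..Suc (Suc k) + d}. P j)"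
      by (simp add: sum.cl_ivl_Suc)
    finally show ?thesis .
  qed
  have PN: "P ?N = A + (\<Sum>i\<in>{k+3..k+3+d}. a i)"
  proof -
    have "P ?N = (\<Sum>i\<in>{0..(k+2) + Suc d}. a i)" by (simp add: P_def)
    also have "\<dots> = A + (\<Sum>i\<in>{k+2+1..(k+2) + Suc d}. a i)"
      unfolding A_def by (rule sum.ub_add_nat) simp
    also have "{k+2+1..(k+2) + Suc d} = {k+3..k+3+d}" by auto
    finally show ?thesis .
  qed
  have R1: "(\<Sum>i\<in>{k+3..k+2+Suc d}. (real k + 3 + real (Suc d) - real i) * (real (Suc d) + real i - real k) * a i)
     = (\<Sum>i\<in>{k+3..k+2+d}. (real k + 3 + real d - real i) * (real d + real i - real k) * a i)
       + 2 * real (d+2) * (\<Sum>i\<in>{k+3..k+3+d}. a i)"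
  proof -
    have "(\<Sum>i\<in>{k+3..k+2+Suc d}. (real k + 3 + real (Suc d) - real i) * (real (Suc d) + real i - real k) * a i)
       = (\<Sum>i\<in>{k+3..k+2+Suc d}. (real k + 3 + real d - real i) * (real d + real i - real k) * a i + 2 * real (d+2) * a i)
         - (real k + 3 + real d - real (k+3+d)) * (real d + real (k+3+d) - real k) * a (k+3+d)"
      by (simp add: sum.cl_ivl_Suc algebra_simps)
    also have "\<dots> = (\<Sum>i\<in>{k+3..k+2+d}. (real k + 3 + real d - real i) * (real d + real i - real k) * a i)
       + 2 * real (d+2) * (\<Sum>i\<in>{k+3..k+3+d}. a i)"
    proof -
      define c0 where "c0 i = (real k + 3 + real d - real i) * (real d + real i - real k) * a i" for i
      have e1: "{k+3..k+2+Suc d} = {k+3..k+3+d}" by auto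
      have e2: "(\<Sum>i\<in>{k+3..k+3+d}. c0 i) = (\<Sum>i\<in>{k+3..k+2+d}. c0 i) + c0 (k+3+d)"
      proof -
        have h: "k+3+d = Suc (k+2+d)" by simp
        show ?thesis unfolding h
          by (subst atLeastAtMostSuc_conv) auto
      qed
      show ?thesis
        unfolding c0_def[symmetric] e1 sum.distrib e2 sum_distrib_left[symmetric] by simp
    qed
    finally show ?thesis .
  qed
  have "2 * (\<Sum>l\<in>{Suc k..Suc k + Suc d}. \<Sum>j\<in>{Suc l..Suc (Suc k) + Suc d}. P j)
      = 2 * (\<Sum>l\<in>{Suc k..Suc k + d}. \<Sum>j\<in>{Suc l..Suc (Suc k) + d}. P j) + 2 * real (d+2) * P ?N"
    using L by (simp add: algebra_simps)
  also have "\<dots> = real (d+1) * real (d+2) * A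
         + (\<Sum>i\<in>{k+3..k+2+d}. (real k + 3 + real d - real i) * (real d + real i - real k) * a i)
         + 2 * real (d+2) * (A + (\<Sum>i\<in>{k+3..k+3+d}. a i))"
    using Suc.IH unfolding P_def A_def PN[unfolded P_def A_def] by simp
  also have "\<dots> = real (Suc d+1) * real (Suc d+2) * A
         + (\<Sum>i\<in>{k+3..k+2+Suc d}. (real k + 3 + real (Suc d) - real i) * (real (Suc d) + real i - real k) * a i)"
    unfolding R1 by (simp add: algebra_simps)
  finally show ?case unfolding P_def A_def .
qed



lemma sum_int_ivl: "(\<Sum>x\<in>{int a..int b}. f x) = (\<Sum>x\<in>{a..b}. f (int x))"
  by (simp add: image_int_atLeastAtMost[symmetric] sum.reindex)

lemma I210k_diag: "I210k p p = {}"
proof (rule ccontr)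
  assume "I210k p p \<noteq> {}" then obtain e where e: "e \<in> I210k p p" by blast
  then have h: "0 < p" "e!(p-1) = p" "\<forall>i<p. e!i < Suc i" by (auto simp: I210k_def I210_def inv_seqs_def)
  then have "e!(p-1) < Suc (p-1)" by (metis diff_less zero_less_one)
  then show False using h by simp
qed

theorem mainTheorem15:
  fixes n k :: nat
  assumes "1 \<le> n" and "k < n"
  shows "int (card (I210k n k)) =
           int (card (I210 (n - 1)))
           - (\<Sum>l\<in>{int k + 1..int n - 4}. \<Sum>j\<in>{l + 1..int n - 3}. \<Sum>i\<in>{0..j}.
                 int (card (I210k (n - 3) (nat i))))
    \<and> ((n \<le> 4 \<or> (5 \<le> n \<and> n - 5 < k)) \<longrightarrow> card (I210k n k) = card (I210 (n - 1)))
    \<and> ((5 \<le> n \<and> k \<le> n - 5) \<longrightarrow>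
         real (card (I210k n k)) =
           real (card (I210 (n - 1)))
           - 1/2 * ( real (n - k - 4) * real (n - k - 3)
                       * (\<Sum>i=0..k+2. real (card (I210k (n - 3) i)))
                    + (\<Sum>i=k+3..n-4. real (n - i - 2) * (real n + real i - 2 * real k - 5)
                                       * real (card (I210k (n - 3) i)))))"
proof -
  define a where "a i = card (I210k (n - 3) i)" for i
  define T where "T = (\<Sum>l\<in>{k+1..n-4}. \<Sum>j\<in>{l+1..n-3}. \<Sum>i\<in>{0..j}. a i)"
  have NM: "card (I210k n k) + T = card (I210 (n-1))"
    using nat_main[OF assms] unfolding T_def a_def .
  have P1: "(\<Sum>l\<in>{int k + 1..int n - 4}. \<Sum>j\<in>{l + 1..int n - 3}. \<Sum>i\<in>{0..j}. int (a (nat i))) = int T"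
  proof (cases "4 \<le> n")
    case True
    have s1: "{int k + 1..int n - 4} = {int (k+1)..int (n-4)}" using True by simp
    show ?thesis unfolding s1 sum_int_ivl T_def of_nat_sum
    proof (intro sum.cong refl)
      fix l assume l: "l \<in> {k+1..n-4}"
      have s2: "{int l + 1..int n - 3} = {int (l+1)..int (n-3)}" using True by simp
      show "(\<Sum>j\<in>{int l + 1..int n - 3}. \<Sum>i\<in>{0..j}. int (a (nat i))) = (\<Sum>j\<in>{l+1..n-3}. \<Sum>i\<in>{0..j}. int (a i))"
        unfolding s2 sum_int_ivl
      proof (intro sum.cong refl)
        fix j
        have s3: "{0..int j} = {int 0..int j}" by simp
        show "(\<Sum>i\<in>{0..int j}. int (a (nat i))) = (\<Sum>i\<in>{0..j}. int (a i))"
          unfolding s3 sum_int_ivl by simp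
      qed
    qed
  next
    case False
    then have "{int k + 1..int n - 4} = {}" "{k+1..n-4} = {}" by auto
    then show ?thesis unfolding T_def by simp
  qed
  have part1: "int (card (I210k n k)) = int (card (I210 (n - 1)))
           - (\<Sum>l\<in>{int k + 1..int n - 4}. \<Sum>j\<in>{l + 1..int n - 3}. \<Sum>i\<in>{0..j}.
                 int (card (I210k (n - 3) (nat i))))"
    using P1 NM unfolding a_def by linarith
  have part2: "((n \<le> 4 \<or> (5 \<le> n \<and> n - 5 < k)) \<longrightarrow> card (I210k n k) = card (I210 (n - 1)))"
  proof
    assume "n \<le> 4 \<or> (5 \<le> n \<and> n - 5 < k)"
    then have "{k+1..n-4} = {}" by auto
    then have "T = 0" unfolding T_def by simp
    then show "card (I210k n k) = card (I210 (n - 1))" using NM by simp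
  qed
  have part3: "((5 \<le> n \<and> k \<le> n - 5) \<longrightarrow>
         real (card (I210k n k)) =
           real (card (I210 (n - 1)))
           - 1/2 * ( real (n - k - 4) * real (n - k - 3)
                       * (\<Sum>i=0..k+2. real (card (I210k (n - 3) i)))
                    + (\<Sum>i=k+3..n-4. real (n - i - 2) * (real n + real i - 2 * real k - 5)
                                       * real (card (I210k (n - 3) i)))))"
  proof
    assume h: "5 \<le> n \<and> k \<le> n - 5"
    define d where "d = n - 5 - k"
    have nd: "n = k + 5 + d" using h unfolding d_def by linarith
    let ?a = "\<lambda>i. real (a i)"
    have TT: "T = (\<Sum>l\<in>{Suc k..Suc k + d}. \<Sum>j\<in>{Suc l..Suc (Suc k) + d}. \<Sum>i\<in>{0..j}. a i)"
      unfolding T_def using nd by (simp add: numeral_eq_Suc)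
    have id: "2 * real T = real (d+1) * real (d+2) * (\<Sum>i\<in>{0..k+2}. ?a i)
         + (\<Sum>i\<in>{k+3..k+2+d}. (real k + 3 + real d - real i) * (real d + real i - real k) * ?a i)"
      unfolding TT of_nat_sum using ident[of ?a k d] by simp
    have last0: "a (k+2+d) = 0"
      unfolding a_def using nd I210k_diag[of "n-3"] by (simp add: numeral_eq_Suc)
    have split: "(\<Sum>i\<in>{k+3..k+2+d}. (real k + 3 + real d - real i) * (real d + real i - real k) * ?a i)
        = (\<Sum>i\<in>{k+3..k+1+d}. (real k + 3 + real d - real i) * (real d + real i - real k) * ?a i)"
    proof (cases d)
      case 0 then show ?thesis by simp
    next
      case (Suc d')
      have "k+2+d = Suc (k+1+d)" by simp
      then show ?thesis using last0 by (simp del: sum.cl_ivl_Suc add: atLeastAtMostSuc_conv Suc)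
    qed
    have cf: "(\<Sum>i\<in>{k+3..k+1+d}. (real k + 3 + real d - real i) * (real d + real i - real k) * ?a i)
        = (\<Sum>i=k+3..n-4. real (n - i - 2) * (real n + real i - 2 * real k - 5) * ?a i)"
    proof -
      have "n - 4 = k + 1 + d" using nd by simp
      moreover have "real (n - i - 2) * (real n + real i - 2 * real k - 5) = (real k + 3 + real d - real i) * (real d + real i - real k)"
        if "i \<in> {k+3..k+1+d}" for i
      proof -
        have "real (n - i - 2) = real k + 3 + real d - real i" using that nd by (simp add: of_nat_diff)
        moreover have "real n + real i - 2 * real k - 5 = real d + real i - real k" using nd by simp
        ultimately show ?thesis by simp
      qed
      ultimately show ?thesis by (intro sum.cong) auto
    qed
    have rr: "real (n - k - 4) = real d + 1" "real (n - k - 3) = real d + 2" using nd by auto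
    have "real (card (I210k n k)) = real (card (I210 (n - 1))) - real T" using NM by (simp flip: of_nat_add)
    then show "real (card (I210k n k)) =
           real (card (I210 (n - 1)))
           - 1/2 * ( real (n - k - 4) * real (n - k - 3)
                       * (\<Sum>i=0..k+2. real (card (I210k (n - 3) i)))
                    + (\<Sum>i=k+3..n-4. real (n - i - 2) * (real n + real i - 2 * real k - 5)
                                       * real (card (I210k (n - 3) i))))"
      using id split cf rr unfolding a_def by (simp add: algebra_simps)
  qed
  show ?thesis using part1 part2 part3 by blast
qed


end
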